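(* Let $f=a_0+ a_{1}z+\cdots+a_m z^m\in \mathbb{Z}[z]$ be primitive (the greatest common divisor of its coefficients is $1$). Suppose there exists a positive real number $\alpha$ such that \[ |a_m| \alpha^m>|a_0|+|a_1|\alpha+\cdots+|a_{m-1}|\alpha^{m-1}. \] If there exist natural numbers $n$ and $d$ with $n\geq \alpha+ d$ such that either $|f(n)|/d$ is a prime, or $|f(n)|/d$ is a prime power coprime to $|f'(n)|$, then $f$ is irreducible in $\mathbb{Z}[z]$.
   Context: $f'$ denotes the derivative of $f$. Natural numbers are positive integers. *)

theory Defs
  imports "HOL-Computational_Algebra.Computational_Algebra"
begin

end

theory Submission
  imports Defs
begin

lemma mp_add: "map_poly (of_int :: int \<Rightarrow> 'a::comm_ring_1) (p + q) = map_poly of_int p + map_poly of_int q"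
  by (intro poly_eqI) (simp add: coeff_map_poly)

lemma mp_mult: "map_poly (of_int :: int \<Rightarrow> 'a::comm_ring_1) (p * q) = map_poly of_int p * map_poly of_int q"
proof (induction p rule: pCons_induct)
  case 0
  then show ?case by simp
next
  case (pCons a p)
  have "map_poly (of_int :: int \<Rightarrow> 'a) (pCons a p * q) = map_poly of_int (smult a q + pCons 0 (p * q))"
    by simp
  also have "\<dots> = smult (of_int a) (map_poly of_int q) + pCons 0 (map_poly of_int p * map_poly of_int q)"
    by (simp add: mp_add map_poly_smult map_poly_pCons pCons.IH)
  also have "\<dots> = map_poly (of_int :: int \<Rightarrow> 'a) (pCons a p) * map_poly of_int q"
    by (simp add: map_poly_pCons)
  finally show ?case .
qed

lemma mp_poly: "poly (map_poly (of_int :: int \<Rightarrow> 'a::comm_ring_1) p) (of_int x) = of_int (poly p x)"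
  by (induction p rule: pCons_induct) (simp_all add: map_poly_pCons)

lemma mp_degree: "degree (map_poly (of_int :: int \<Rightarrow> 'a::{comm_ring_1,ring_char_0}) p) = degree p"
  by (rule degree_map_poly) simp

lemma mp_nz: "p \<noteq> 0 \<Longrightarrow> map_poly (of_int :: int \<Rightarrow> 'a::{comm_ring_1,ring_char_0}) p \<noteq> 0"
  by (metis coeff_map_poly leading_coeff_0_iff mp_degree of_int_0 of_int_eq_0_iff)

lemma prod_bound:
  fixes g :: "complex poly" and e :: real
  assumes "g \<noteq> 0" "e \<ge> 0" "\<And>z. poly g z = 0 \<Longrightarrow> e \<le> norm (x - z)"
  shows "norm (poly g x) \<ge> norm (lead_coeff g) * e ^ degree g"
  using assms
proof (induction "degree g" arbitrary: g)
  case 0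
  then obtain c where "g = [:c:]" by (metis degree_eq_zeroE)
  then show ?case by simp
next
  case (Suc k)
  then have "\<not> constant (poly g)" by (simp add: constant_degree)
  then obtain z where z: "poly g z = 0" using fundamental_theorem_of_algebra by blast
  then obtain g' where g': "g = [:-z, 1:] * g'" using poly_eq_0_iff_dvd by (metis dvdE)
  have g'nz: "g' \<noteq> 0" using Suc.prems g' by auto
  have "degree g = degree [:-z, 1:] + degree g'" unfolding g' using g'nz
    by (intro degree_mult_eq) auto
  then have dg: "degree g = Suc (degree g')" by simp
  have lc: "lead_coeff g = lead_coeff g'" unfolding g' lead_coeff_mult by simp
  have roots: "e \<le> norm (x - w)" if "poly g' w = 0" for w
    using Suc.prems(3)[of w] that g' by simp
  have IH: "norm (poly g' x) \<ge> norm (lead_coeff g') * e ^ degree g'"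
    using Suc.hyps(1)[of g'] dg Suc.hyps(2) g'nz Suc.prems(2) roots by auto
  have "poly g x = (x - z) * poly g' x" unfolding g' poly_mult by simp
  then have "norm (poly g x) = norm (x - z) * norm (poly g' x)" by (simp add: norm_mult)
  also have "\<dots> \<ge> e * (norm (lead_coeff g') * e ^ degree g')"
    using IH Suc.prems(3)[OF z] Suc.prems(2) by (intro mult_mono) auto
  finally show ?case using lc dg by (simp add: algebra_simps)
qed

lemma termwise:
  fixes a r :: real assumes "0 < a" "a \<le> r" "i \<le> m"
  shows "a ^ m * r ^ i \<le> r ^ m * a ^ i"
proof -
  have m: "m = i + (m - i)" using assms by simp
  have "a ^ (m - i) \<le> r ^ (m - i)" using assms by (intro power_mono) auto
  then have "a ^ i * a ^ (m - i) * r ^ i \<le> a ^ i * r ^ (m - i) * r ^ i"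
    using assms by (intro mult_right_mono mult_left_mono) auto
  moreover have "a ^ m = a ^ i * a ^ (m - i)" "r ^ m = r ^ (m - i) * r ^ i"
    by (metis m power_add, metis m power_add mult.commute)
  ultimately show ?thesis by (simp add: algebra_simps)
qed

lemma root_bound:
  fixes f :: "int poly" and \<alpha> :: real and z :: complex
  assumes alpha_pos: "\<alpha> > 0"
    and dominant: "real_of_int \<bar>lead_coeff f\<bar> * \<alpha> ^ degree f >
                   (\<Sum>i<degree f. real_of_int \<bar>coeff f i\<bar> * \<alpha> ^ i)"
    and root: "poly (map_poly of_int f) z = 0"
  shows "norm z < \<alpha>"
proof (rule ccontr)
  assume "\<not> norm z < \<alpha>"
  then have ra: "\<alpha> \<le> norm z" by simp
  define m where "m = degree f"
  define r where "r = norm z"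
  have rpos: "r > 0" using ra alpha_pos r_def by linarith
  have "poly (map_poly of_int f) z = (\<Sum>i\<le>m. of_int (coeff f i) * z ^ i)"
    unfolding poly_altdef mp_degree m_def by (simp add: coeff_map_poly)
  also have "\<dots> = (\<Sum>i<m. of_int (coeff f i) * z ^ i) + of_int (coeff f m) * z ^ m"
    by (simp add: lessThan_Suc_atMost[symmetric])
  finally have "of_int (coeff f m) * z ^ m = - (\<Sum>i<m. of_int (coeff f i) * z ^ i)"
    using root by (simp add: add_eq_0_iff)
  then have "norm (of_int (coeff f m) * z ^ m) = norm (\<Sum>i<m. of_int (coeff f i) * z ^ i)"
    by simp
  also have "\<dots> \<le> (\<Sum>i<m. norm (of_int (coeff f i) * z ^ i))" by (rule norm_sum)
  finally have A: "\<bar>real_of_int (coeff f m)\<bar> * r ^ m \<le> (\<Sum>i<m. \<bar>real_of_int (coeff f i)\<bar> * r ^ i)"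
    by (simp add: norm_mult norm_power r_def)
  have "\<alpha> ^ m * (\<Sum>i<m. \<bar>real_of_int (coeff f i)\<bar> * r ^ i)
      = (\<Sum>i<m. \<bar>real_of_int (coeff f i)\<bar> * (\<alpha> ^ m * r ^ i))"
    by (simp add: sum_distrib_left algebra_simps)
  also have "\<dots> \<le> (\<Sum>i<m. \<bar>real_of_int (coeff f i)\<bar> * (r ^ m * \<alpha> ^ i))"
    using alpha_pos ra r_def by (intro sum_mono mult_left_mono termwise) auto
  also have "\<dots> = r ^ m * (\<Sum>i<m. \<bar>real_of_int (coeff f i)\<bar> * \<alpha> ^ i)"
    by (simp add: sum_distrib_left algebra_simps)
  also have "\<dots> < r ^ m * (\<bar>real_of_int (coeff f m)\<bar> * \<alpha> ^ m)"
    using dominant rpos unfolding m_def by (intro mult_strict_left_mono) auto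
  finally have "\<alpha> ^ m * (\<Sum>i<m. \<bar>real_of_int (coeff f i)\<bar> * r ^ i)
      < \<alpha> ^ m * (\<bar>real_of_int (coeff f m)\<bar> * r ^ m)" by (simp add: algebra_simps)
  moreover have "\<alpha> ^ m * (\<bar>real_of_int (coeff f m)\<bar> * r ^ m) \<le> \<alpha> ^ m * (\<Sum>i<m. \<bar>real_of_int (coeff f i)\<bar> * r ^ i)"
    using A alpha_pos by (intro mult_left_mono) auto
  ultimately show False by simp
qed

lemma arith_contra:
  fixes G H q :: int and d :: nat
  assumes "\<bar>G\<bar> > int d" "\<bar>H\<bar> > int d" "\<bar>G * H\<bar> = int d * q" "q dvd G"
  shows False
proof -
  obtain k where k: "G = q * k" using assms(4) by (auto elim: dvdE)
  have qnz: "q \<noteq> 0" using k assms(1) by auto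
  have "\<bar>q\<bar> * \<bar>k * H\<bar> = int d * q" using assms(3) k by (simp add: abs_mult algebra_simps)
  have knz: "k \<noteq> 0" using k assms(1) by auto
  have hnz: "H \<noteq> 0" using assms(2) by auto
  have "0 < \<bar>q\<bar> * \<bar>k * H\<bar>" using qnz knz hnz by simp
  then have "0 < int d * q" using \<open>\<bar>q\<bar> * \<bar>k * H\<bar> = int d * q\<close> by simp
  then have "q > 0" by (simp add: zero_less_mult_iff)
  then have "\<bar>k * H\<bar> = int d" using \<open>\<bar>q\<bar> * \<bar>k * H\<bar> = int d * q\<close> by (simp add: mult.commute)
  moreover have "k \<noteq> 0" using k assms(1) by auto
  then have "\<bar>k\<bar> \<ge> 1" by linarith
  then have "\<bar>k * H\<bar> \<ge> \<bar>H\<bar>" by (simp add: abs_mult mult_le_cancel_right1)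
  ultimately show False using assms(2) by simp
qed

lemma factor_big:
  fixes f g :: "int poly" and \<alpha> :: real and n d :: nat
  assumes alpha_pos: "\<alpha> > 0"
    and dominant: "real_of_int \<bar>lead_coeff f\<bar> * \<alpha> ^ degree f >
                   (\<Sum>i<degree f. real_of_int \<bar>coeff f i\<bar> * \<alpha> ^ i)"
    and d_pos: "d \<ge> 1"
    and n_ge: "real n \<ge> \<alpha> + real d"
    and fnz: "f \<noteq> 0" and gdvd: "g dvd f" and dg: "degree g \<ge> 1"
  shows "\<bar>poly g (int n)\<bar> > int d"
proof -
  obtain h where fgh: "f = g * h" using gdvd by (auto elim: dvdE)
  define fc :: "complex poly" where "fc = map_poly of_int f"
  define gc :: "complex poly" where "gc = map_poly of_int g"
  define hc :: "complex poly" where "hc = map_poly of_int h"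
  have fc: "fc = gc * hc" unfolding fc_def gc_def hc_def fgh mp_mult ..
  have gnz: "g \<noteq> 0" using fnz fgh by auto
  have fcnz: "fc \<noteq> 0" unfolding fc_def using fnz by (rule mp_nz)
  have gcnz: "gc \<noteq> 0" unfolding gc_def using gnz by (rule mp_nz)
  define R where "R = {z. poly fc z = 0}"
  have finR: "finite R" unfolding R_def using fcnz by (rule poly_roots_finite)
  define r where "r = Max (insert 0 (norm ` R))"
  have r_in: "r \<in> insert 0 (norm ` R)" unfolding r_def using finR by (intro Max_in) auto
  have r_lt: "r < \<alpha>"
  proof -
    have "x < \<alpha>" if "x \<in> insert 0 (norm ` R)" for x
      using that alpha_pos root_bound[OF alpha_pos dominant, of] unfolding R_def fc_def by auto
    then show ?thesis using r_in by blast
  qed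
  have r_ge: "norm w \<le> r" if "w \<in> R" for w
    unfolding r_def using finR that by (intro Max_ge) auto
  define e where "e = real n - r"
  have e_gt: "e > real d" using r_lt n_ge e_def by linarith
  have e_ge1: "e \<ge> 1" using e_gt d_pos by linarith
  define x :: complex where "x = of_int (int n)"
  have roots: "e \<le> norm (x - w)" if "poly gc w = 0" for w
  proof -
    have "w \<in> R" unfolding R_def fc using that by simp
    then have "norm w \<le> r" by (rule r_ge)
    moreover have "norm x - norm w \<le> norm (x - w)" by (rule norm_triangle_ineq2)
    moreover have "norm x = real n" unfolding x_def by simp
    ultimately show ?thesis unfolding e_def by linarith
  qed
  have pb: "norm (poly gc x) \<ge> norm (lead_coeff gc) * e ^ degree gc"
    using gcnz e_ge1 roots by (intro prod_bound) auto
  have lc: "lead_coeff gc = of_int (lead_coeff g)"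
    unfolding gc_def mp_degree by (simp add: coeff_map_poly)
  have "lead_coeff g \<noteq> 0" using gnz by simp
  then have "\<bar>lead_coeff g\<bar> \<ge> 1" by linarith
  then have lc1: "norm (lead_coeff gc) \<ge> 1" unfolding lc norm_of_int
    by (metis of_int_1_le_iff of_int_abs)
  have "e ^ degree gc \<ge> e ^ 1" unfolding gc_def mp_degree
    using dg e_ge1 by (intro power_increasing) auto
  then have "e ^ degree gc \<ge> e" by simp
  then have "norm (lead_coeff gc) * e ^ degree gc \<ge> 1 * e"
    using lc1 e_ge1 by (intro mult_mono) auto
  then have "norm (poly gc x) > real d" using pb e_gt by linarith
  moreover have "poly gc x = of_int (poly g (int n))" unfolding gc_def x_def by (rule mp_poly)
  ultimately have "real_of_int \<bar>poly g (int n)\<bar> > real d" by (simp add: norm_of_int)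
  then show ?thesis by linarith
qed

theorem corollary4:
  fixes f :: "int poly" and \<alpha> :: real and n d :: nat
  assumes primitive: "content f = 1"
    and alpha_pos: "\<alpha> > 0"
    and dominant: "real_of_int \<bar>lead_coeff f\<bar> * \<alpha> ^ degree f >
                   (\<Sum>i<degree f. real_of_int \<bar>coeff f i\<bar> * \<alpha> ^ i)"
    and n_pos: "n \<ge> 1" and d_pos: "d \<ge> 1"
    and n_ge: "real n \<ge> \<alpha> + real d"
    and cond: "\<exists>q::int. \<bar>poly f (int n)\<bar> = int d * q \<and>
                 (prime q \<or>
                  (\<exists>p k. prime p \<and> k \<ge> 1 \<and> q = p ^ k \<and>
                         coprime q \<bar>poly (pderiv f) (int n)\<bar>))"
  shows "irreducible f"
proof -
  obtain q where q: "\<bar>poly f (int n)\<bar> = int d * q"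
    and qc: "prime q \<or> (\<exists>p k. prime p \<and> k \<ge> 1 \<and> q = p ^ k \<and>
                         coprime q \<bar>poly (pderiv f) (int n)\<bar>)"
    using cond by blast
  have q2: "q \<ge> 2"
  proof (cases "prime q")
    case True
    then show ?thesis by (simp add: prime_ge_2_int)
  next
    case False
    then obtain p k where "prime p" "k \<ge> 1" "q = p ^ k" using qc by blast
    moreover have "p \<ge> 2" using \<open>prime p\<close> by (simp add: prime_ge_2_int)
    moreover have "p ^ 1 \<le> p ^ k" using \<open>p \<ge> 2\<close> \<open>k \<ge> 1\<close> by (intro power_increasing) auto
    ultimately show ?thesis by simp
  qed
  have "int d * q \<ge> 1 * 2" using d_pos q2 by (intro mult_mono) auto
  then have fn2: "\<bar>poly f (int n)\<bar> \<ge> 2" using q by simp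
  have fnz: "f \<noteq> 0" using fn2 by auto
  have big: "\<bar>poly g (int n)\<bar> > int d" if "g dvd f" "degree g \<ge> 1" for g
    using factor_big[OF alpha_pos dominant d_pos n_ge fnz that] .
  show ?thesis
  proof (rule irreducibleI)
    show "f \<noteq> 0" by (rule fnz)
    show "\<not> f dvd 1"
    proof
      assume "f dvd 1"
      then obtain c where "f = [:c:]" "c dvd 1" by (auto simp: is_unit_poly_iff)
      then have "\<bar>poly f (int n)\<bar> = 1" by auto
      then show False using fn2 by simp
    qed
    fix a b assume fab: "f = a * b"
    have unit0: "c dvd 1" if "u = [:c:]" "content u * w = 1" for u w c
    proof -
      have "normalize c * w = 1" using that by simp
      then have "normalize c dvd 1" using dvd_triv_left[of "normalize c" w] by simp
      then show ?thesis by simp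
    qed
    have cab: "content a * content b = 1" using primitive fab by (simp add: content_mult)
    show "a dvd 1 \<or> b dvd 1"
    proof (cases "degree a = 0 \<or> degree b = 0")
      case True
      then show ?thesis
      proof
        assume "degree a = 0"
        then obtain c where "a = [:c:]" by (metis degree_eq_zeroE)
        then have "c dvd 1" using unit0[of a c "content b"] cab by simp
        then show ?thesis using \<open>a = [:c:]\<close> by (auto simp: is_unit_poly_iff)
      next
        assume "degree b = 0"
        then obtain c where "b = [:c:]" by (metis degree_eq_zeroE)
        then have "c dvd 1" using unit0[of b c "content a"] cab by (simp add: mult.commute)
        then show ?thesis using \<open>b = [:c:]\<close> by (auto simp: is_unit_poly_iff)
      qed
    next
      case False
      define G where "G = poly a (int n)"
      define H where "H = poly b (int n)"
      have bG: "\<bar>G\<bar> > int d" unfolding G_def using False fab by (intro big) auto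
      have bH: "\<bar>H\<bar> > int d" unfolding H_def using False fab by (intro big) auto
      have GH: "\<bar>G * H\<bar> = int d * q" using q fab by (simp add: G_def H_def)
      have HG: "\<bar>H * G\<bar> = int d * q" using GH by (simp add: mult.commute)
      have "q dvd \<bar>G * H\<bar>" unfolding GH by simp
      then have qdvd: "q dvd G * H" by simp
      show ?thesis
      proof (cases "prime q")
        case True
        then have "q dvd G \<or> q dvd H" using qdvd prime_dvd_mult_iff by blast
        then show ?thesis using arith_contra[OF bG bH GH] arith_contra[OF bH bG HG] by blast
      next
        case False
        then obtain p k where p: "prime p" "k \<ge> 1" "q = p ^ k"
          and cop: "coprime q \<bar>poly (pderiv f) (int n)\<bar>" using qc by blast
        have der: "poly (pderiv f) (int n) = G * poly (pderiv b) (int n) + H * poly (pderiv a) (int n)"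
          unfolding fab pderiv_mult G_def H_def by simp
        have "\<not> (p dvd G \<and> p dvd H)"
        proof
          assume "p dvd G \<and> p dvd H"
          then have "p dvd \<bar>poly (pderiv f) (int n)\<bar>" unfolding der by simp
          moreover have "p dvd q" using p by (simp add: dvd_power)
          ultimately have "is_unit p" using cop coprime_common_divisor by blast
          then show False using p(1) not_prime_unit by blast
        qed
        then have "coprime p H \<or> coprime p G"
          using p prime_imp_coprime by blast
        then have "coprime q H \<or> coprime q G"
          using p by simp
        then have "q dvd G \<or> q dvd H" using qdvd
          using coprime_dvd_mult_left_iff coprime_dvd_mult_right_iff by blast
        then show ?thesis using arith_contra[OF bG bH GH] arith_contra[OF bH bG HG] by blast
      qed
    qed
  qed
qed

end
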